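(* $N^1(BA_2^+)=\Omega(n)$.
   Context: $BA_2^+$ is the syntactic ordered monoid of the language $(ab)^*\subseteq\{a,b\}^*$. Syntactic ordered monoid: for $L\subseteq\Sigma^*$ write $x\preceq_L y$ if for all $u,v\in\Sigma^*$, $uyv\in L\Rightarrow uxv\in L$, and $x\equiv_L y$ if both $x\preceq_L y$ and $y\preceq_L x$; the syntactic monoid is $\Sigma^*/\equiv_L$ ordered by $[x]\le_L[y]$ iff $x\preceq_L y$. Non-deterministic communication complexity: for $f:X\times Y\to\{0,1\}$, $N^1(f)$ is the minimum cost of a non-deterministic protocol for $f$; equivalently, up to an additive constant 2, $N^1(f)=\log_2 C^1(f)$, where $C^1(f)$ is the minimum number of rectangles $S\times T$ on which $f\equiv1$ whose union is $f^{-1}(1)$. An order ideal of an ordered monoid $M$ is a subset $I$ with $y\in I, x\le y\Rightarrow x\in I$. For an order ideal $I$, $N^1(M,I)(n)$ is $N^1$ of the function where Alice receives $m_1,m_3,\dots,m_{2n-1}\in M$, Bob receives $m_2,\dots,m_{2n}\in M$, with value $1$ iff $m_1\cdots m_{2n}\in I$; $N^1(M)(n)=\max_I N^1(M,I)(n)$. Asymptotics are as $n\to\infty$. *)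

theory Defs
  imports Complex_Main "HOL-Library.Landau_Symbols"
begin

definition syn_le :: "'a list set \<Rightarrow> 'a list \<Rightarrow> 'a list \<Rightarrow> bool" where
  "syn_le L x y \<longleftrightarrow> (\<forall>u v. u @ y @ v \<in> L \<longrightarrow> u @ x @ v \<in> L)"

definition syn_eq :: "'a list set \<Rightarrow> 'a list \<Rightarrow> 'a list \<Rightarrow> bool" where
  "syn_eq L x y \<longleftrightarrow> syn_le L x y \<and> syn_le L y x"

definition syn_class :: "'a list set \<Rightarrow> 'a list \<Rightarrow> 'a list set" where
  "syn_class L x = {y. syn_eq L x y}"

definition syn_carrier :: "'a list set \<Rightarrow> 'a list set set" where
  "syn_carrier L = range (syn_class L)"

definition syn_mult :: "'a list set \<Rightarrow> 'a list set \<Rightarrow> 'a list set \<Rightarrow> 'a list set" where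
  "syn_mult L c d = syn_class L ((SOME x. x \<in> c) @ (SOME y. y \<in> d))"

definition syn_one :: "'a list set \<Rightarrow> 'a list set" where
  "syn_one L = syn_class L []"

definition syn_leq :: "'a list set \<Rightarrow> 'a list set \<Rightarrow> 'a list set \<Rightarrow> bool" where
  "syn_leq L c d \<longleftrightarrow> syn_le L (SOME x. x \<in> c) (SOME y. y \<in> d)"

definition syn_prod :: "'a list set \<Rightarrow> 'a list set list \<Rightarrow> 'a list set" where
  "syn_prod L cs = foldr (syn_mult L) cs (syn_one L)"

definition order_ideal :: "'a list set \<Rightarrow> 'a list set set \<Rightarrow> bool" where
  "order_ideal L I \<longleftrightarrow> I \<subseteq> syn_carrier L \<and>
     (\<forall>c\<in>syn_carrier L. \<forall>d\<in>I. syn_leq L c d \<longrightarrow> c \<in> I)"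

definition C1 :: "'x set \<Rightarrow> 'y set \<Rightarrow> ('x \<Rightarrow> 'y \<Rightarrow> bool) \<Rightarrow> nat" where
  "C1 X Y f = (LEAST k. \<exists>R. finite R \<and> card R = k \<and>
      (\<forall>(S,T)\<in>R. S \<subseteq> X \<and> T \<subseteq> Y \<and> (\<forall>x\<in>S. \<forall>y\<in>T. f x y)) \<and>
      {(x,y). x \<in> X \<and> y \<in> Y \<and> f x y} = (\<Union>(S,T)\<in>R. S \<times> T))"

definition N1 :: "'x set \<Rightarrow> 'y set \<Rightarrow> ('x \<Rightarrow> 'y \<Rightarrow> bool) \<Rightarrow> real" where
  "N1 X Y f = log 2 (real (C1 X Y f))"

text \<open>Alice holds m1,m3,...,m_{2n-1}, Bob holds m2,...,m_{2n}.\<close>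
definition interleave :: "'b list \<Rightarrow> 'b list \<Rightarrow> 'b list" where
  "interleave xs ys = concat (map (\<lambda>(x,y). [x,y]) (zip xs ys))"

definition inputs :: "'a list set \<Rightarrow> nat \<Rightarrow> 'a list set list set" where
  "inputs L n = {xs. length xs = n \<and> set xs \<subseteq> syn_carrier L}"

definition N1_ideal :: "'a list set \<Rightarrow> 'a list set set \<Rightarrow> nat \<Rightarrow> real" where
  "N1_ideal L I n = N1 (inputs L n) (inputs L n)
      (\<lambda>xs ys. syn_prod L (interleave xs ys) \<in> I)"

definition N1_monoid :: "'a list set \<Rightarrow> nat \<Rightarrow> real" where
  "N1_monoid L n = Max {N1_ideal L I n | I. order_ideal L I}"

datatype letter = A | B

definition L_ab :: "letter list set" where
  "L_ab = {concat (replicate k [A, B]) | k. True}"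

end

theory Submission
  imports Defs
begin

section \<open>General facts on the syntactic congruence\<close>

lemma syn_eq_refl: "syn_eq L x x"
  by (simp add: syn_eq_def syn_le_def)

lemma syn_eq_sym: "syn_eq L x y \<Longrightarrow> syn_eq L y x"
  by (simp add: syn_eq_def)

lemma syn_eq_trans: "syn_eq L x y \<Longrightarrow> syn_eq L y z \<Longrightarrow> syn_eq L x z"
  unfolding syn_eq_def syn_le_def by blast

lemma syn_eq_class: "syn_eq L x y \<Longrightarrow> syn_class L x = syn_class L y"
  unfolding syn_class_def using syn_eq_sym syn_eq_trans by blast

lemma in_class: "x \<in> syn_class L x"
  by (simp add: syn_class_def syn_eq_refl)

lemma some_class: "syn_eq L x (SOME z. z \<in> syn_class L x)"
proof -
  have "(SOME z. z \<in> syn_class L x) \<in> syn_class L x" by (rule someI, rule in_class)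
  thus ?thesis by (simp add: syn_class_def)
qed

lemma syn_le_app_r: "syn_le L x x' \<Longrightarrow> syn_le L (x @ y) (x' @ y)"
  unfolding syn_le_def by (metis append.assoc)

lemma syn_le_app_l: "syn_le L y y' \<Longrightarrow> syn_le L (x @ y) (x @ y')"
  unfolding syn_le_def by (metis append.assoc)

lemma syn_eq_app: "syn_eq L x x' \<Longrightarrow> syn_eq L y y' \<Longrightarrow> syn_eq L (x @ y) (x' @ y')"
proof -
  assume a: "syn_eq L x x'" and b: "syn_eq L y y'"
  have "syn_eq L (x @ y) (x' @ y)" using a unfolding syn_eq_def
    by (simp add: syn_le_app_r)
  moreover have "syn_eq L (x' @ y) (x' @ y')" using b unfolding syn_eq_def
    by (simp add: syn_le_app_l)
  ultimately show ?thesis by (rule syn_eq_trans)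
qed

lemma syn_mult_class: "syn_mult L (syn_class L x) (syn_class L y) = syn_class L (x @ y)"
  unfolding syn_mult_def
  by (rule syn_eq_class, rule syn_eq_sym, rule syn_eq_app, rule some_class, rule some_class)

lemma syn_prod_map: "syn_prod L (map (syn_class L) ws) = syn_class L (concat ws)"
  by (induction ws) (simp_all add: syn_prod_def syn_one_def syn_mult_class)

lemma syn_eq_mem: "syn_eq L x y \<Longrightarrow> x \<in> L \<longleftrightarrow> y \<in> L"
  unfolding syn_eq_def syn_le_def by (metis append_Nil append_Nil2)

definition I0 :: "'a list set \<Rightarrow> 'a list set set" where
  "I0 L = {c \<in> syn_carrier L. \<exists>w\<in>c. w \<in> L}"

lemma I0_ideal: "order_ideal L (I0 L)"
  unfolding order_ideal_def
proof (intro conjI ballI impI)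
  show "I0 L \<subseteq> syn_carrier L" by (auto simp: I0_def)
next
  fix c d assume c: "c \<in> syn_carrier L" and d: "d \<in> I0 L" and le: "syn_leq L c d"
  obtain x where cx: "c = syn_class L x" using c by (auto simp: syn_carrier_def)
  obtain y where dy: "d = syn_class L y" using d by (auto simp: I0_def syn_carrier_def)
  obtain w where w: "w \<in> d" "w \<in> L" using d by (auto simp: I0_def)
  have "syn_eq L y w" using w dy by (simp add: syn_class_def)
  hence "syn_eq L (SOME z. z \<in> d) w" using some_class[of L y] dy
    by (metis syn_eq_sym syn_eq_trans)
  hence "(SOME z. z \<in> d) \<in> L" using w syn_eq_mem by blast
  hence "(SOME z. z \<in> c) \<in> L" using le unfolding syn_leq_def syn_le_def
    by (metis append_Nil append_Nil2)
  moreover have "(SOME z. z \<in> c) \<in> c" using cx in_class by (metis someI)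
  ultimately show "c \<in> I0 L" using c by (auto simp: I0_def)
qed

lemma I0_class: "syn_class L w \<in> I0 L \<longleftrightarrow> w \<in> L"
proof
  assume "syn_class L w \<in> I0 L"
  then obtain w' where "w' \<in> syn_class L w" "w' \<in> L" by (auto simp: I0_def)
  thus "w \<in> L" using syn_eq_mem by (auto simp: syn_class_def)
next
  assume "w \<in> L" thus "syn_class L w \<in> I0 L"
    using in_class by (auto simp: I0_def syn_carrier_def)
qed

section \<open>Automaton for (ab)^*\<close>

definition st :: "nat \<Rightarrow> letter \<Rightarrow> nat" where
  "st q c = (if q = 0 \<and> c = A then 1 else if q = 1 \<and> c = B then 0 else 2)"

definition run :: "nat \<Rightarrow> letter list \<Rightarrow> nat" where
  "run q w = foldl st q w"

lemma run_Nil[simp]: "run q [] = q" by (simp add: run_def)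
lemma run_Cons[simp]: "run q (c # w) = run (st q c) w" by (simp add: run_def)
lemma run_app[simp]: "run q (x @ y) = run (run q x) y" by (simp add: run_def)

lemma run_2: "run 2 w = 2"
  by (induction w) (simp_all add: st_def)

lemma run_le: "q \<le> 2 \<Longrightarrow> run q w \<le> 2"
  by (induction w arbitrary: q) (simp_all add: st_def)

lemma concat_rep_snoc: "concat (replicate k xs) @ xs = concat (replicate (Suc k) xs)"
  by (induction k) simp_all

lemma run_rep: "run 0 (concat (replicate k [A,B])) = 0"
  by (induction k) (simp_all add: st_def)

lemma run_conv: "(run 0 w = 0 \<longrightarrow> w \<in> L_ab) \<and>
   (run 0 w = 1 \<longrightarrow> (\<exists>k. w = concat (replicate k [A,B]) @ [A]))"
proof (induction w rule: rev_induct)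
  case Nil
  have "[] = concat (replicate 0 [A,B])" by simp
  thus ?case by (auto simp: L_ab_def)
next
  case (snoc c w)
  show ?case
  proof (intro conjI impI)
    assume h: "run 0 (w @ [c]) = 0"
    hence "run 0 w = 1" "c = B" by (auto simp: st_def split: if_splits)
    then obtain k where "w = concat (replicate k [A,B]) @ [A]" using snoc by auto
    hence "w @ [c] = concat (replicate (Suc k) [A,B])" using \<open>c = B\<close>
      by (metis append.assoc append_Cons append_Nil concat_rep_snoc)
    thus "w @ [c] \<in> L_ab" unfolding L_ab_def by blast
  next
    assume h: "run 0 (w @ [c]) = 1"
    hence "run 0 w = 0" "c = A" by (auto simp: st_def split: if_splits)
    then obtain k where "w = concat (replicate k [A,B])" using snoc by (auto simp: L_ab_def)
    thus "\<exists>k. w @ [c] = concat (replicate k [A,B]) @ [A]" using \<open>c = A\<close> by auto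
  qed
qed

lemma L_ab_iff: "w \<in> L_ab \<longleftrightarrow> run 0 w = 0"
  using run_conv[of w] run_rep by (auto simp: L_ab_def)

lemma run_syn_eq:
  assumes "run 0 x = run 0 y" "run 1 x = run 1 y"
  shows "syn_eq L_ab x y"
proof -
  have "u @ x @ v \<in> L_ab \<longleftrightarrow> u @ y @ v \<in> L_ab" for u v
  proof -
    have "run 0 u \<le> 2" by (rule run_le) simp
    hence "run 0 u = 0 \<or> run 0 u = 1 \<or> run 0 u = 2" by auto
    hence "run (run 0 u) x = run (run 0 u) y" using assms run_2 by auto
    thus ?thesis by (simp add: L_ab_iff)
  qed
  thus ?thesis by (simp add: syn_eq_def syn_le_def)
qed

lemma finite_carrier: "finite (syn_carrier L_ab)"
proof -
  let ?rep = "\<lambda>p. syn_class L_ab (SOME x. (run 0 x, run 1 x) = p)"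
  have "syn_carrier L_ab \<subseteq> ?rep ` ({..2} \<times> {..2})"
  proof
    fix c assume "c \<in> syn_carrier L_ab"
    then obtain x where cx: "c = syn_class L_ab x" by (auto simp: syn_carrier_def)
    let ?p = "(run 0 x, run 1 x)"
    have p: "?p \<in> {..2} \<times> {..2}" using run_le[of 0 x] run_le[of 1 x] by auto
    have "(run 0 (SOME x'. (run 0 x', run 1 x') = ?p), run 1 (SOME x'. (run 0 x', run 1 x') = ?p)) = ?p"
      by (rule someI[where x = x]) simp
    hence "syn_eq L_ab x (SOME x'. (run 0 x', run 1 x') = ?p)"
      by (intro run_syn_eq) auto
    hence "c = ?rep ?p" using cx syn_eq_class by blast
    thus "c \<in> ?rep ` ({..2} \<times> {..2})" using p by blast
  qed
  thus ?thesis by (rule finite_subset) simp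
qed

section \<open>Fooling set\<close>

lemma interleave_Cons[simp]: "interleave (x # xs) (y # ys) = x # y # interleave xs ys"
  by (simp add: interleave_def)

lemma interleave_Nil1[simp]: "interleave [] ys = []"
  by (simp add: interleave_def)

lemma interleave_Nil2[simp]: "interleave xs [] = []"
  by (simp add: interleave_def)

lemma interleave_map: "interleave (map f xs) (map f ys) = map f (interleave xs ys)"
  by (induction xs arbitrary: ys) (auto simp: neq_Nil_conv, case_tac ys, auto)

definition g' :: "bool \<Rightarrow> letter list" where "g' b = (if b then [A,B] else [A])"
definition h' :: "bool \<Rightarrow> letter list" where "h' b = (if b then [] else [B])"
definition W :: "bool list \<Rightarrow> bool list \<Rightarrow> letter list" where
  "W s t = concat (interleave (map g' s) (map h' t))"

lemma W_Cons: "W (b # s) (c # t) = g' b @ h' c @ W s t"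
  by (simp add: W_def)

lemma run1_W: "run 1 (W s t) \<noteq> 0"
proof (cases s)
  case Nil thus ?thesis by (simp add: W_def)
next
  case (Cons b s')
  show ?thesis
  proof (cases t)
    case Nil thus ?thesis by (simp add: W_def)
  next
    case (Cons c t')
    thus ?thesis using \<open>s = b # s'\<close> run_2
      by (simp add: W_Cons g'_def st_def)
  qed
qed

lemma W_same: "run 0 (W s s) = 0"
  by (induction s) (auto simp: W_def g'_def h'_def st_def)

lemma W_inj: "length s = length t \<Longrightarrow> run 0 (W s t) = 0 \<Longrightarrow> s = t"
proof (induction s arbitrary: t)
  case Nil thus ?case by simp
next
  case (Cons b s)
  then obtain c t' where t: "t = c # t'" by (cases t) auto
  have r: "run 0 (W (b # s) t) = run (run 0 (g' b @ h' c)) (W s t')"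
    by (simp add: t W_Cons)
  show ?case
  proof (cases "b = c")
    case True
    hence "run 0 (g' b @ h' c) = 0" by (auto simp: g'_def h'_def st_def)
    thus ?thesis using Cons r t True by auto
  next
    case False
    hence "run 0 (g' b @ h' c) = 1 \<or> run 0 (g' b @ h' c) = 2"
      by (cases b; cases c) (auto simp: g'_def h'_def st_def)
    hence "run (run 0 (g' b @ h' c)) (W s t') \<noteq> 0"
      using run1_W[of s t'] run_2[of "W s t'"] by (elim disjE) simp_all
    thus ?thesis using Cons.prems r by simp
  qed
qed

lemma fooling:
  assumes finR: "finite R"
    and rect: "\<forall>(S,T)\<in>R. S \<subseteq> X \<and> T \<subseteq> Y \<and> (\<forall>x\<in>S. \<forall>y\<in>T. f x y)"
    and cov: "{(x,y). x \<in> X \<and> y \<in> Y \<and> f x y} = (\<Union>(S,T)\<in>R. S \<times> T)"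
    and ones: "\<forall>s\<in>F. xa s \<in> X \<and> yb s \<in> Y \<and> f (xa s) (yb s)"
    and fool: "\<forall>s\<in>F. \<forall>t\<in>F. f (xa s) (yb t) \<and> f (xa t) (yb s) \<longrightarrow> s = t"
  shows "card F \<le> card R"
proof -
  have "\<forall>s\<in>F. \<exists>r\<in>R. (xa s, yb s) \<in> fst r \<times> snd r"
  proof
    fix s assume "s \<in> F"
    hence "(xa s, yb s) \<in> (\<Union>(S,T)\<in>R. S \<times> T)" using ones cov by blast
    then obtain S T where "(S,T) \<in> R" "(xa s, yb s) \<in> S \<times> T" by blast
    thus "\<exists>r\<in>R. (xa s, yb s) \<in> fst r \<times> snd r" by (intro bexI[of _ "(S,T)"]) auto
  qed
  hence "\<exists>r. \<forall>s\<in>F. r s \<in> R \<and> (xa s, yb s) \<in> fst (r s) \<times> snd (r s)"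
    by (intro bchoice) blast
  then obtain r where r: "\<forall>s\<in>F. r s \<in> R \<and> (xa s, yb s) \<in> fst (r s) \<times> snd (r s)"
    by blast
  have "inj_on r F"
  proof (rule inj_onI)
    fix s t assume st: "s \<in> F" "t \<in> F" "r s = r t"
    obtain S T where ST: "r s = (S,T)" by (cases "r s")
    have "(S,T) \<in> R" using r st(1) ST by auto
    hence fr: "\<forall>x\<in>S. \<forall>y\<in>T. f x y" using rect by blast
    have p1: "(xa s, yb s) \<in> fst (r s) \<times> snd (r s)" using r st(1) by blast
    have p2: "(xa t, yb t) \<in> fst (r t) \<times> snd (r t)" using r st(2) by blast
    have "xa s \<in> S" "yb s \<in> T" "xa t \<in> S" "yb t \<in> T"
      using p1 p2 ST st(3) by auto
    thus "s = t" using fr fool st by blast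
  qed
  moreover have "r ` F \<subseteq> R" using r by auto
  ultimately show ?thesis by (rule card_inj_on_le[OF _ _ finR])
qed

lemma C1_ge:
  assumes fX: "finite X" and fY: "finite Y"
    and ones: "\<forall>s\<in>F. xa s \<in> X \<and> yb s \<in> Y \<and> f (xa s) (yb s)"
    and fool: "\<forall>s\<in>F. \<forall>t\<in>F. f (xa s) (yb t) \<and> f (xa t) (yb s) \<longrightarrow> s = t"
  shows "card F \<le> C1 X Y f"
proof -
  let ?P = "\<lambda>k. \<exists>R. finite R \<and> card R = k \<and>
      (\<forall>(S,T)\<in>R. S \<subseteq> X \<and> T \<subseteq> Y \<and> (\<forall>x\<in>S. \<forall>y\<in>T. f x y)) \<and>
      {(x,y). x \<in> X \<and> y \<in> Y \<and> f x y} = (\<Union>(S,T)\<in>R. S \<times> T)"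
  let ?Z = "{(x,y). x \<in> X \<and> y \<in> Y \<and> f x y}"
  let ?R = "(\<lambda>p. ({fst p}, {snd p})) ` ?Z"
  have "?Z \<subseteq> X \<times> Y" by blast
  hence "finite ?Z" using finite_cartesian_product[OF fX fY] by (rule finite_subset)
  hence f1: "finite ?R" by simp
  have f2: "\<forall>(S,T)\<in>?R. S \<subseteq> X \<and> T \<subseteq> Y \<and> (\<forall>x\<in>S. \<forall>y\<in>T. f x y)"
    by auto
  have f3: "?Z = (\<Union>(S,T)\<in>?R. S \<times> T)"
  proof
    show "?Z \<subseteq> (\<Union>(S,T)\<in>?R. S \<times> T)"
    proof
      fix p assume "p \<in> ?Z"
      hence m: "({fst p},{snd p}) \<in> ?R" by blast
      show "p \<in> (\<Union>(S,T)\<in>?R. S \<times> T)"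
      proof (rule UN_I[OF m])
        show "p \<in> (case ({fst p},{snd p}) of (S,T) \<Rightarrow> S \<times> T)" by (cases p) simp
      qed
    qed
  next
    show "(\<Union>(S,T)\<in>?R. S \<times> T) \<subseteq> ?Z" by auto
  qed
  have "?P (card ?R)" using f1 f2 f3 by blast
  hence "?P (C1 X Y f)" unfolding C1_def by (rule LeastI)
  then obtain R where R: "finite R" "card R = C1 X Y f"
      "\<forall>(S,T)\<in>R. S \<subseteq> X \<and> T \<subseteq> Y \<and> (\<forall>x\<in>S. \<forall>y\<in>T. f x y)"
      "{(x,y). x \<in> X \<and> y \<in> Y \<and> f x y} = (\<Union>(S,T)\<in>R. S \<times> T)"
    by blast
  show ?thesis using fooling[OF R(1) R(3) R(4) ones fool] R(2) by simp
qed

lemma finite_inputs: "finite (inputs L_ab n)"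
proof -
  have "inputs L_ab n = {xs. set xs \<subseteq> syn_carrier L_ab \<and> length xs = n}"
    by (auto simp: inputs_def)
  thus ?thesis using finite_lists_length_eq[OF finite_carrier] by simp
qed

lemma N1_ideal_ge: "real n \<le> N1_ideal L_ab (I0 L_ab) n"
proof -
  let ?F = "{s :: bool list. set s \<subseteq> UNIV \<and> length s = n}"
  let ?xa = "\<lambda>s. map (syn_class L_ab) (map g' s)"
  let ?yb = "\<lambda>s. map (syn_class L_ab) (map h' s)"
  let ?f = "\<lambda>xs ys. syn_prod L_ab (interleave xs ys) \<in> I0 L_ab"
  have fval: "?f (?xa s) (?yb t) \<longleftrightarrow> run 0 (W s t) = 0" for s t
    unfolding interleave_map syn_prod_map I0_class W_def L_ab_iff by (rule refl)
  have ones: "\<forall>s\<in>?F. ?xa s \<in> inputs L_ab n \<and> ?yb s \<in> inputs L_ab n \<and> ?f (?xa s) (?yb s)"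
  proof
    fix s assume sF: "s \<in> ?F"
    have "?xa s \<in> inputs L_ab n \<and> ?yb s \<in> inputs L_ab n"
      using sF by (auto simp: inputs_def syn_carrier_def)
    moreover have "?f (?xa s) (?yb s)" by (subst fval) (rule W_same)
    ultimately show "?xa s \<in> inputs L_ab n \<and> ?yb s \<in> inputs L_ab n \<and> ?f (?xa s) (?yb s)"
      by blast
  qed
  have fool: "\<forall>s\<in>?F. \<forall>t\<in>?F. ?f (?xa s) (?yb t) \<and> ?f (?xa t) (?yb s) \<longrightarrow> s = t"
  proof (intro ballI impI)
    fix s t assume sF: "s \<in> ?F" and tF: "t \<in> ?F" and h: "?f (?xa s) (?yb t) \<and> ?f (?xa t) (?yb s)"
    have h1: "?f (?xa s) (?yb t)" using h by (rule conjunct1)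
    have r0: "run 0 (W s t) = 0" using h1 by (subst (asm) fval)
    have ln: "length s = length t" using sF tF by simp
    show "s = t" by (rule W_inj[OF ln r0])
  qed
  have cF: "card ?F \<le> C1 (inputs L_ab n) (inputs L_ab n) ?f"
    by (rule C1_ge[OF finite_inputs finite_inputs ones fool])
  have cardF: "card ?F = 2 ^ n"
    using card_lists_length_eq[of "UNIV :: bool set" n] by simp
  have c0: "2 ^ n \<le> C1 (inputs L_ab n) (inputs L_ab n) ?f"
    using cF unfolding cardF .
  have c1: "real (2 ^ n) \<le> real (C1 (inputs L_ab n) (inputs L_ab n) ?f)"
    using c0 by (rule of_nat_mono)
  have c: "(2::real) ^ n \<le> real (C1 (inputs L_ab n) (inputs L_ab n) ?f)"
    using c1 by (simp only: of_nat_power of_nat_numeral)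
  have "real n = log 2 ((2::real) ^ n)" by (simp add: log_nat_power)
  also have "\<dots> \<le> log 2 (real (C1 (inputs L_ab n) (inputs L_ab n) ?f))"
    by (rule log_mono[OF _ _ c]) simp_all
  finally show ?thesis by (simp add: N1_ideal_def N1_def)
qed

lemma N1_monoid_ge: "real n \<le> N1_monoid L_ab n"
proof -
  have "{N1_ideal L_ab I n | I. order_ideal L_ab I} = (\<lambda>I. N1_ideal L_ab I n) ` {I. order_ideal L_ab I}"
    by auto
  moreover have "finite {I. order_ideal L_ab I}"
    by (rule finite_subset[of _ "Pow (syn_carrier L_ab)"]) (auto simp: order_ideal_def finite_carrier)
  ultimately have fin: "finite {N1_ideal L_ab I n | I. order_ideal L_ab I}" by simp
  have "N1_ideal L_ab (I0 L_ab) n \<in> {N1_ideal L_ab I n | I. order_ideal L_ab I}"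
    using I0_ideal by blast
  hence "N1_ideal L_ab (I0 L_ab) n \<le> N1_monoid L_ab n"
    unfolding N1_monoid_def using fin by (rule Max_ge[rotated])
  thus ?thesis using N1_ideal_ge[of n] by linarith
qed

theorem mainTheorem10:
  shows "(\<lambda>n. N1_monoid L_ab n) \<in> \<Omega>(\<lambda>n. real n)"
proof -
  have "(\<lambda>n. real n) \<in> O(\<lambda>n. N1_monoid L_ab n)"
  proof (rule bigoI[where c = 1], rule always_eventually, rule allI)
    fix n
    have "real n \<le> N1_monoid L_ab n" by (rule N1_monoid_ge)
    thus "norm (real n) \<le> 1 * norm (N1_monoid L_ab n)" by simp
  qed
  thus ?thesis by (simp add: bigomega_iff_bigo)
qed

end
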